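(* Let $\mathrm{Min}=\{X\in 2^\omega: X \text{ is of minimal Turing degree}\}$ and suppose $\dim_H(\mathrm{Min})=r$. Then every maximal antichain of Turing degrees has Hausdorff dimension at least $r$.
   Context: $X$ is of minimal degree if $X$ is non-computable and every $Y\le_T X$ is either computable or satisfies $X\le_T Y$. A class $\mathcal B\subseteq 2^\omega$ is an antichain of Turing degrees if (a) $\mathcal B$ contains no computable set; (b) $X\in\mathcal B$ and $Y\equiv_T X$ imply $Y\in\mathcal B$; (c) for all $X,Y\in\mathcal B$ with $X\not\equiv_T Y$, $X\not<_T Y$ and $Y\not<_T X$; it is maximal if for every (non-computable) $W\notin\mathcal B$ the class $\mathcal B\cup\{X:X\equiv_T W\}$ is no longer an antichain. $\dim_H$ is the classical Hausdorff dimension on Cantor space. *)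

theory Defs
  imports Complex_Main "HOL-Library.Extended_Nonnegative_Real"
begin

datatype rf =
    Zero
  | Succ
  | Proj nat
  | Comp rf "rf list"
  | Prec rf rf
  | Mu rf
  | Oracle

inductive eval :: "nat set \<Rightarrow> rf \<Rightarrow> nat list \<Rightarrow> nat \<Rightarrow> bool" for A :: "nat set" where
  eval_zero: "eval A Zero xs 0"
| eval_succ: "eval A Succ (x # xs) (Suc x)"
| eval_proj: "i < length xs \<Longrightarrow> eval A (Proj i) xs (xs ! i)"
| eval_comp: "length ys = length gs \<Longrightarrow> (\<forall>i < length gs. eval A (gs ! i) xs (ys ! i))
     \<Longrightarrow> eval A f ys y \<Longrightarrow> eval A (Comp f gs) xs y"
| eval_prec0: "eval A f xs y \<Longrightarrow> eval A (Prec f g) (0 # xs) y"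
| eval_precS: "eval A (Prec f g) (n # xs) r \<Longrightarrow> eval A g (n # r # xs) y
     \<Longrightarrow> eval A (Prec f g) (Suc n # xs) y"
| eval_mu: "eval A f (n # xs) 0 \<Longrightarrow> (\<forall>m < n. \<exists>k. eval A f (m # xs) (Suc k))
     \<Longrightarrow> eval A (Mu f) xs n"
| eval_oracle: "eval A Oracle (x # xs) (if x \<in> A then 1 else 0)"

text \<open>Sets of naturals are identified with elements of Cantor space 2^omega.\<close>

definition turing_le :: "nat set \<Rightarrow> nat set \<Rightarrow> bool" (infix "\<le>\<^sub>T" 50) where
  "X \<le>\<^sub>T Y \<longleftrightarrow> (\<exists>e. \<forall>n. eval Y e [n] (if n \<in> X then 1 else 0))"

definition turing_eq :: "nat set \<Rightarrow> nat set \<Rightarrow> bool" (infix "\<equiv>\<^sub>T" 50) where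
  "X \<equiv>\<^sub>T Y \<longleftrightarrow> X \<le>\<^sub>T Y \<and> Y \<le>\<^sub>T X"

definition turing_less :: "nat set \<Rightarrow> nat set \<Rightarrow> bool" (infix "<\<^sub>T" 50) where
  "X <\<^sub>T Y \<longleftrightarrow> X \<le>\<^sub>T Y \<and> \<not> Y \<le>\<^sub>T X"

definition computable :: "nat set \<Rightarrow> bool" where
  "computable X \<longleftrightarrow> X \<le>\<^sub>T {}"

definition minimal_degree :: "nat set \<Rightarrow> bool" where
  "minimal_degree X \<longleftrightarrow> \<not> computable X \<and>
     (\<forall>Y. Y \<le>\<^sub>T X \<longrightarrow> computable Y \<or> X \<le>\<^sub>T Y)"

definition Min_deg :: "nat set set" where
  "Min_deg = {X. minimal_degree X}"

definition antichain :: "nat set set \<Rightarrow> bool" where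
  "antichain B \<longleftrightarrow>
     (\<forall>X\<in>B. \<not> computable X) \<and>
     (\<forall>X Y. X \<in> B \<and> Y \<equiv>\<^sub>T X \<longrightarrow> Y \<in> B) \<and>
     (\<forall>X\<in>B. \<forall>Y\<in>B. \<not> X \<equiv>\<^sub>T Y \<longrightarrow> \<not> X <\<^sub>T Y \<and> \<not> Y <\<^sub>T X)"

definition maximal_antichain :: "nat set set \<Rightarrow> bool" where
  "maximal_antichain B \<longleftrightarrow> antichain B \<and>
     (\<forall>W. \<not> computable W \<and> W \<notin> B \<longrightarrow> \<not> antichain (B \<union> {X. X \<equiv>\<^sub>T W}))"

text \<open>Cantor space with the metric d(X,Y) = 2^(-min{i. X i differs from Y i}).
  Every set of diameter at most 2^(-n) lies in a cylinder of length n, whose diameter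
  is 2^(-n); hence the s-dimensional Hausdorff measure is computed exactly by
  countable covers by cylinders.\<close>

definition cyl :: "bool list \<Rightarrow> nat set set" where
  "cyl \<sigma> = {X. \<forall>i < length \<sigma>. (i \<in> X) = \<sigma> ! i}"

definition hausdorff_measure :: "real \<Rightarrow> nat set set \<Rightarrow> ennreal" where
  "hausdorff_measure s A =
     (SUP n::nat. INF c \<in> {c :: nat \<Rightarrow> bool list.
          A \<subseteq> (\<Union>i. cyl (c i)) \<and> (\<forall>i. n \<le> length (c i))}.
        (\<Sum>i. ennreal (2 powr (- s * real (length (c i))))))"

definition dim_H :: "nat set set \<Rightarrow> real" where
  "dim_H A = Inf {s. 0 \<le> s \<and> hausdorff_measure s A = 0}"

end

theory Submission
  imports Defs
begin


lemma ev_proj: "i < length xs \<Longrightarrow> xs ! i = y \<Longrightarrow> eval A (Proj i) xs y"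
  using eval_proj by blast
lemma ev_succ: "y = Suc x \<Longrightarrow> eval A Succ (x # xs) y"
  using eval_succ by blast
lemma ev_comp1: "eval A g xs y1 \<Longrightarrow> eval A f [y1] y \<Longrightarrow> eval A (Comp f [g]) xs y"
  by (rule eval_comp[of "[y1]"]) auto
lemma ev_comp2: "eval A g1 xs y1 \<Longrightarrow> eval A g2 xs y2 \<Longrightarrow> eval A f [y1,y2] y
   \<Longrightarrow> eval A (Comp f [g1,g2]) xs y"
  by (rule eval_comp[of "[y1,y2]"]) (auto simp: less_Suc_eq nth_Cons')
lemma ev_comp3: "eval A g1 xs y1 \<Longrightarrow> eval A g2 xs y2 \<Longrightarrow> eval A g3 xs y3 \<Longrightarrow> eval A f [y1,y2,y3] y
   \<Longrightarrow> eval A (Comp f [g1,g2,g3]) xs y"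
  by (rule eval_comp[of "[y1,y2,y3]"]) (auto simp: less_Suc_eq nth_Cons')

definition "DOUBLE = Prec Zero (Comp Succ [Comp Succ [Proj 1]])"
lemma ev_DOUBLE: "eval A DOUBLE [m] (2*m)"
proof (induction m)
  case 0 then show ?case unfolding DOUBLE_def using eval_prec0[OF eval_zero] by simp
next
  case (Suc m)
  have "eval A (Comp Succ [Comp Succ [Proj 1]]) [m, 2*m] (2 * Suc m)"
    by (rule ev_comp1[OF ev_comp1[OF ev_proj ev_succ] ev_succ]) auto
  then show ?case using Suc unfolding DOUBLE_def by (rule eval_precS[rotated])
qed

definition "POW2 = Prec (Comp Succ [Zero]) (Comp DOUBLE [Proj 1])"
lemma ev_POW2: "eval A POW2 [m] (2^m)"
proof (induction m)
  case 0 then show ?case unfolding POW2_def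
    using eval_prec0[OF ev_comp1[OF eval_zero ev_succ]] by simp
next
  case (Suc m)
  have "eval A (Comp DOUBLE [Proj 1]) [m, 2^m] (2 ^ Suc m)"
    by (rule ev_comp1[OF ev_proj]) (auto intro: ev_DOUBLE)
  then show ?case using Suc unfolding POW2_def by (rule eval_precS[rotated])
qed

definition "PRED = Prec Zero (Proj 0)"
lemma ev_PRED: "eval A PRED [m] (m - 1)"
proof (induction m)
  case 0 then show ?case unfolding PRED_def using eval_prec0[OF eval_zero] by simp
next
  case (Suc k)
  show ?case using Suc unfolding PRED_def
    by (rule eval_precS) (auto intro!: ev_proj)
qed

definition "SUB = Prec (Proj 0) (Comp PRED [Proj 1])"
lemma ev_SUB: "eval A SUB [b, a] (a - b)"
proof (induction b)
  case 0 then show ?case unfolding SUB_def by (auto intro!: eval_prec0 ev_proj)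
next
  case (Suc b)
  have "eval A (Comp PRED [Proj 1]) [b, a - b, a] (a - Suc b)"
    using ev_PRED[of A "a - b"] by (intro ev_comp1[OF ev_proj]) auto
  then show ?case using Suc unfolding SUB_def by (rule eval_precS[rotated])
qed

definition "IFZ = Prec (Proj 1) (Proj 2)"
lemma ev_IFZ_ex: "\<exists>r. eval A IFZ [b, u, v] r"
proof (induction b)
  case 0 then show ?case unfolding IFZ_def by (auto intro!: eval_prec0 ev_proj)
next
  case (Suc b)
  then obtain r where "eval A IFZ [b, u, v] r" by blast
  then show ?case unfolding IFZ_def by (auto intro!: eval_precS ev_proj)
qed
lemma ev_IFZ: "eval A IFZ [b, u, v] (if 0 < b then u else v)"
proof (cases b)
  case 0 then show ?thesis unfolding IFZ_def by (auto intro!: eval_prec0 ev_proj)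
next
  case (Suc k)
  obtain r where "eval A IFZ [k, u, v] r" using ev_IFZ_ex by blast
  then show ?thesis unfolding IFZ_def Suc by (auto intro!: eval_precS ev_proj)
qed

fun sor :: "rf \<Rightarrow> rf \<Rightarrow> rf" where
  "sor p Oracle = Comp p [Proj 0]"
| "sor p (Comp f gs) = Comp (sor p f) (map (sor p) gs)"
| "sor p (Prec f g) = Prec (sor p f) (sor p g)"
| "sor p (Mu f) = Mu (sor p f)"
| "sor p Zero = Zero"
| "sor p Succ = Succ"
| "sor p (Proj i) = Proj i"

lemma eval_sor:
  assumes "eval Y e xs y" and p: "\<And>n. eval W p [n] (if n \<in> Y then 1 else 0)"
  shows "eval W (sor p e) xs y"
  using assms(1)
proof (induction rule: eval.induct)
  case (eval_comp ys gs xs f y)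
  then show ?case by (auto intro!: eval.eval_comp)
next
  case (eval_oracle x xs)
  show ?case unfolding sor.simps
  proof (rule ev_comp1)
    show "eval W (Proj 0) (x # xs) x" by (rule ev_proj) auto
  qed (rule p)
qed (auto intro: eval.intros)

lemma turing_le_trans: "X \<le>\<^sub>T Y \<Longrightarrow> Y \<le>\<^sub>T W \<Longrightarrow> X \<le>\<^sub>T W"
  unfolding turing_le_def using eval_sor by blast

lemma turing_le_refl: "X \<le>\<^sub>T X"
  unfolding turing_le_def using eval_oracle by blast



definition cnt :: "nat \<Rightarrow> nat" where "cnt n = (LEAST c. n \<le> 2^c)"

lemma n_le_pow_cnt: "n \<le> 2 ^ cnt n"
proof -
  have "n \<le> 2^n" using less_exp[of n] by simp
  then show ?thesis unfolding cnt_def by (rule LeastI)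
qed

lemma cnt_le_iff: "cnt n \<le> c \<longleftrightarrow> n \<le> 2^c"
proof
  assume "cnt n \<le> c"
  then have "(2::nat) ^ cnt n \<le> 2 ^ c" by (simp add: power_increasing)
  then show "n \<le> 2^c" using n_le_pow_cnt order_trans by blast
next
  assume "n \<le> 2^c" then show "cnt n \<le> c" unfolding cnt_def by (rule Least_le)
qed

lemma less_pow_iff: "2^k < n \<longleftrightarrow> k < cnt n"
  using cnt_le_iff[of n k] by auto

lemma cnt_pow: "cnt (2^k) = k"
proof (rule antisym)
  show "cnt (2^k) \<le> k" using cnt_le_iff by simp
  have "(2::nat)^k \<le> 2 ^ cnt (2^k)" using n_le_pow_cnt by blast
  then show "k \<le> cnt (2^k)" by simp
qed

definition code :: "nat set \<Rightarrow> nat set \<Rightarrow> nat set" where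
  "code X Y = {n. if 2 ^ cnt n = n then cnt n \<in> Y else n - cnt n \<in> X}"

definition "CNT = Mu (Comp SUB [Comp POW2 [Proj 0], Proj 1])"

lemma ev_CNT: "eval A CNT [n] (cnt n)"
  unfolding CNT_def
proof (rule eval_mu)
  have "eval A (Comp SUB [Comp POW2 [Proj 0], Proj 1]) [m, n] (n - 2^m)" for m
    by (rule ev_comp2[OF ev_comp1[OF ev_proj ev_POW2] ev_proj ev_SUB]) auto
  note * = this
  show "eval A (Comp SUB [Comp POW2 [Proj 0], Proj 1]) [cnt n, n] 0"
    using *[of "cnt n"] n_le_pow_cnt[of n] by simp
  show "\<forall>m<cnt n. \<exists>k. eval A (Comp SUB [Comp POW2 [Proj 0], Proj 1]) [m, n] (Suc k)"
  proof (intro allI impI)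
    fix m assume "m < cnt n"
    then have "2^m < n" using less_pow_iff by blast
    then have "n - 2^m = Suc (n - 2^m - 1)" by simp
    then show "\<exists>k. eval A (Comp SUB [Comp POW2 [Proj 0], Proj 1]) [m, n] (Suc k)"
      using *[of m] by metis
  qed
qed

lemma code_le: assumes "X \<le>\<^sub>T Y" shows "code X Y \<le>\<^sub>T Y"
proof -
  obtain e where e: "\<And>n. eval Y e [n] (if n \<in> X then 1 else 0)"
    using assms unfolding turing_le_def by blast
  let ?P = "Comp IFZ [Comp SUB [Proj 0, Comp POW2 [CNT]], Comp e [Comp SUB [CNT, Proj 0]], Comp Oracle [CNT]]"
  have "eval Y ?P [n] (if n \<in> code X Y then 1 else 0)" for n
  proof (rule ev_comp3)
    show "eval Y (Comp SUB [Proj 0, Comp POW2 [CNT]]) [n] (2 ^ cnt n - n)"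
      by (rule ev_comp2[OF ev_proj ev_comp1[OF ev_CNT ev_POW2] ev_SUB]) auto
    show "eval Y (Comp e [Comp SUB [CNT, Proj 0]]) [n] (if n - cnt n \<in> X then 1 else 0)"
      by (rule ev_comp1[OF ev_comp2[OF ev_CNT ev_proj ev_SUB] e]) auto
    show "eval Y (Comp Oracle [CNT]) [n] (if cnt n \<in> Y then 1 else 0)"
      by (rule ev_comp1[OF ev_CNT eval_oracle])
    have eq: "(if 0 < 2 ^ cnt n - n then (if n - cnt n \<in> X then 1 else 0) else (if cnt n \<in> Y then 1 else 0))
       = (if n \<in> code X Y then 1 else (0::nat))"
      using n_le_pow_cnt[of n] unfolding code_def by auto
    then show "eval Y IFZ [2 ^ cnt n - n, if n - cnt n \<in> X then 1 else 0, if cnt n \<in> Y then 1 else 0]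
       (if n \<in> code X Y then 1 else 0)"
      using ev_IFZ[of Y "2 ^ cnt n - n" "if n - cnt n \<in> X then 1 else 0" "if cnt n \<in> Y then 1 else 0"]
      by (simp only: eq)
  qed
  then show ?thesis unfolding turing_le_def by blast
qed

lemma le_code: "Y \<le>\<^sub>T code X Y"
proof -
  have "eval (code X Y) (Comp Oracle [POW2]) [k] (if k \<in> Y then 1 else 0)" for k
  proof (rule ev_comp1[OF ev_POW2])
    have "(2^k \<in> code X Y) = (k \<in> Y)" by (simp add: code_def cnt_pow)
    then show "eval (code X Y) Oracle [2 ^ k] (if k \<in> Y then 1 else 0)"
      using eval_oracle[of "code X Y" "2^k" "[]"] by simp
  qed
  then show ?thesis unfolding turing_le_def by blast
qed

lemma code_eq: "X \<le>\<^sub>T Y \<Longrightarrow> code X Y \<equiv>\<^sub>T Y"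
  unfolding turing_eq_def using code_le le_code by blast



lemma computable_mono: "X \<le>\<^sub>T Y \<Longrightarrow> computable Y \<Longrightarrow> computable X"
  by (metis computable_def turing_le_trans)

lemma exists_above:
  assumes mb: "maximal_antichain B" and mx: "minimal_degree X"
  shows "\<exists>W\<in>B. X \<le>\<^sub>T W"
proof (cases "X \<in> B")
  case True then show ?thesis using turing_le_refl by blast
next
  case False
  show ?thesis
  proof (rule ccontr)
    assume nW: "\<not> (\<exists>W\<in>B. X \<le>\<^sub>T W)"
    have ab: "antichain B" using mb unfolding maximal_antichain_def by blast
    have ncX: "\<not> computable X" using mx unfolding minimal_degree_def by blast
    have notac: "\<not> antichain (B \<union> {Z. Z \<equiv>\<^sub>T X})"
      using mb ncX False unfolding maximal_antichain_def by blast
    have "antichain (B \<union> {Z. Z \<equiv>\<^sub>T X})"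
      unfolding antichain_def
    proof (intro conjI)
      show "\<forall>Z\<in>B \<union> {Z. Z \<equiv>\<^sub>T X}. \<not> computable Z"
      proof
      fix Z assume "Z \<in> B \<union> {Z. Z \<equiv>\<^sub>T X}"
      then show "\<not> computable Z"
        using ab ncX computable_mono unfolding antichain_def turing_eq_def by blast
      qed
    next
      show "\<forall>Z V. Z \<in> B \<union> {Z. Z \<equiv>\<^sub>T X} \<and> V \<equiv>\<^sub>T Z \<longrightarrow> V \<in> B \<union> {Z. Z \<equiv>\<^sub>T X}"
      proof (intro allI impI)
      fix Z V assume "Z \<in> B \<union> {Z. Z \<equiv>\<^sub>T X} \<and> V \<equiv>\<^sub>T Z"
      then show "V \<in> B \<union> {Z. Z \<equiv>\<^sub>T X}"
        using ab turing_le_trans unfolding antichain_def turing_eq_def by blast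
      qed
    next
      show "\<forall>Z\<in>B \<union> {Z. Z \<equiv>\<^sub>T X}. \<forall>V\<in>B \<union> {Z. Z \<equiv>\<^sub>T X}. \<not> Z \<equiv>\<^sub>T V \<longrightarrow> \<not> Z <\<^sub>T V \<and> \<not> V <\<^sub>T Z"
      proof (intro ballI impI)
      fix Z V assume Z: "Z \<in> B \<union> {Z. Z \<equiv>\<^sub>T X}" and V: "V \<in> B \<union> {Z. Z \<equiv>\<^sub>T X}"
        and ne: "\<not> Z \<equiv>\<^sub>T V"
      have key: "\<not> P <\<^sub>T Q \<and> \<not> Q <\<^sub>T P" if P: "P \<in> B" and Q: "Q \<equiv>\<^sub>T X" for P Q
      proof
        show "\<not> P <\<^sub>T Q"
        proof
          assume "P <\<^sub>T Q"
          then have "P \<le>\<^sub>T X" "\<not> Q \<le>\<^sub>T P" using Q turing_le_trans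
            unfolding turing_less_def turing_eq_def by blast+
          then have "computable P \<or> X \<le>\<^sub>T P" using mx unfolding minimal_degree_def by blast
          then show False using ab P nW \<open>\<not> Q \<le>\<^sub>T P\<close> Q turing_le_trans
            unfolding antichain_def turing_eq_def by blast
        qed
        show "\<not> Q <\<^sub>T P"
        proof
          assume "Q <\<^sub>T P"
          then have "X \<le>\<^sub>T P" using Q turing_le_trans
            unfolding turing_less_def turing_eq_def by blast
          then show False using nW P by blast
        qed
      qed
      show "\<not> Z <\<^sub>T V \<and> \<not> V <\<^sub>T Z"
      proof (cases "Z \<in> B")
        case ZB: True
        show ?thesis
        proof (cases "V \<in> B")
          case True then show ?thesis using ab ZB ne unfolding antichain_def by blast
        next
          case False then show ?thesis using V key ZB by blast
        qed
      next
        case ZB: False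
        then have ZX: "Z \<equiv>\<^sub>T X" using Z by blast
        show ?thesis
        proof (cases "V \<in> B")
          case True then show ?thesis using ZX key by blast
        next
          case False
          then have "V \<equiv>\<^sub>T X" using V by blast
          then show ?thesis using ZX ne turing_le_trans unfolding turing_eq_def by blast
        qed
      qed
      qed
    qed
    then show False using notac by blast
  qed
qed

lemma Min_sub: assumes "maximal_antichain B"
  shows "Min_deg \<subseteq> {X. \<exists>Y. code X Y \<in> B}"
proof
  fix X assume "X \<in> Min_deg"
  then obtain W where W: "W \<in> B" "X \<le>\<^sub>T W" using exists_above[OF assms] unfolding Min_deg_def by blast
  have "code X W \<equiv>\<^sub>T W" using code_eq W by blast
  then have "code X W \<in> B" using W assms unfolding maximal_antichain_def antichain_def by blast
  then show "X \<in> {X. \<exists>Y. code X Y \<in> B}" by blast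
qed



lemma cnt_bound:
  assumes "0 < (d::real)"
  shows "\<exists>N. \<forall>L\<ge>N. real (cnt L) \<le> d * real L"
proof -
  define f where "f = (\<lambda>x::real. (ln x / x) / ln 2 + 1 / x)"
  have "(f \<longlongrightarrow> 0 / ln 2 + 0) at_top" unfolding f_def
    by (intro tendsto_intros ln_x_over_x_tendsto_0 tendsto_inverse_0_at_top[THEN tendsto_eq_rhs]
        tendsto_divide_0[OF tendsto_const] filterlim_at_top_imp_at_infinity filterlim_ident) auto
  then have "(f \<longlongrightarrow> 0) at_top" by simp
  then have "((\<lambda>L. f (real L)) \<longlongrightarrow> 0) sequentially"
    using filterlim_compose filterlim_real_sequentially by blast
  then have "eventually (\<lambda>L. f (real L) < d) sequentially"
    using assms by (rule order_tendstoD)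
  then obtain N where N: "\<And>L. L \<ge> N \<Longrightarrow> f (real L) < d"
    unfolding eventually_sequentially by blast
  show ?thesis
  proof (intro exI allI impI)
    fix L assume L: "max N 2 \<le> L"
    show "real (cnt L) \<le> d * real L"
    proof (cases "cnt L = 0")
      case True then show ?thesis using assms by simp
    next
      case False
      then have "2 ^ (cnt L - 1) < L" using less_pow_iff[of "cnt L - 1" L] by simp
      then have "2 powr real (cnt L - 1) < real L"
        by (metis of_nat_less_iff of_nat_numeral powr_realpow zero_less_numeral of_nat_power)
      then have "real (cnt L - 1) < log 2 (real L)"
        using less_log_iff[of 2 "real L"] L by auto
      then have lt: "real (cnt L) < ln (real L) / ln 2 + 1"
        using False by (simp add: log_def of_nat_diff)
      have "f (real L) < d" using N L by simp
      then have "real L * f (real L) \<le> d * real L" using L by (simp add: mult.commute)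
      moreover have "real L * f (real L) = ln (real L) / ln 2 + 1" unfolding f_def using L
        by (simp add: field_simps)
      ultimately show ?thesis using lt by linarith
    qed
  qed
qed


lemma filter_upt_nth_len:
  "j < length (filter P [0..<L]) \<Longrightarrow> length (filter P [0..<filter P [0..<L] ! j]) = j"
proof (induction L)
  case 0 then show ?case by simp
next
  case (Suc L)
  show ?case
  proof (cases "j < length (filter P [0..<L])")
    case True
    then show ?thesis using Suc by (simp add: nth_append)
  next
    case False
    then have "P L" "j = length (filter P [0..<L])" using Suc.prems by (auto split: if_splits)
    then show ?thesis by (simp add: nth_append)
  qed
qed

lemma len_pow_filter: "length (filter (\<lambda>m. 2 ^ cnt m = m) [0..<n]) = cnt n"
proof -
  have "{m. 2 ^ cnt m = m} \<inter> set [0..<n] = (\<lambda>k. 2^k) ` {..<cnt n}"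
  proof (intro set_eqI iffI)
    fix m assume "m \<in> {m. 2 ^ cnt m = m} \<inter> set [0..<n]"
    then have "2 ^ cnt m = m" "2 ^ cnt m < n" by auto
    then have "cnt m < cnt n" using less_pow_iff[of "cnt m" n] by simp
    then show "m \<in> (\<lambda>k. 2^k) ` {..<cnt n}" using \<open>2 ^ cnt m = m\<close> by (metis imageI lessThan_iff)
  next
    fix m assume "m \<in> (\<lambda>k. (2::nat)^k) ` {..<cnt n}"
    then obtain k where "m = 2^k" "k < cnt n" by auto
    then show "m \<in> {m. 2 ^ cnt m = m} \<inter> set [0..<n]" using less_pow_iff cnt_pow by auto
  qed
  moreover have "inj_on (\<lambda>k. (2::nat)^k) {..<cnt n}" by (auto intro: inj_onI)
  ultimately show ?thesis by (simp add: distinct_length_filter card_image)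
qed

lemma len_np_filter: "length (filter (\<lambda>m. 2 ^ cnt m \<noteq> m) [0..<n]) = n - cnt n"
  using sum_length_filter_compl[of "\<lambda>m. 2 ^ cnt m = m" "[0..<n]"] len_pow_filter[of n] by simp

definition dl :: "bool list \<Rightarrow> bool list" where
  "dl \<sigma> = map (\<lambda>n. \<sigma> ! n) (filter (\<lambda>m. 2 ^ cnt m \<noteq> m) [0..<length \<sigma>])"

lemma len_dl: "length (dl \<sigma>) = length \<sigma> - cnt (length \<sigma>)"
  unfolding dl_def by (simp add: len_np_filter)

lemma cyl_dl: assumes "code X Y \<in> cyl \<sigma>" shows "X \<in> cyl (dl \<sigma>)"
  unfolding cyl_def
proof (intro CollectI allI impI)
  fix j assume j: "j < length (dl \<sigma>)"
  define F where "F = filter (\<lambda>m. 2 ^ cnt m \<noteq> m) [0..<length \<sigma>]"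
  define m where "m = F ! j"
  have jF: "j < length F" using j unfolding dl_def F_def by simp
  then have "m \<in> set F" unfolding m_def by simp
  then have m: "2 ^ cnt m \<noteq> m" "m < length \<sigma>" unfolding F_def by auto
  have "length (filter (\<lambda>m. 2 ^ cnt m \<noteq> m) [0..<m]) = j"
    using filter_upt_nth_len[OF jF[unfolded F_def]] unfolding m_def F_def .
  then have mj: "m - cnt m = j" using len_np_filter by simp
  have "dl \<sigma> ! j = \<sigma> ! m" unfolding dl_def m_def F_def using jF F_def by simp
  also have "\<dots> = (m \<in> code X Y)" using assms m(2) unfolding cyl_def by auto
  also have "\<dots> = (j \<in> X)" using m(1) mj unfolding code_def by simp
  finally show "(j \<in> X) = dl \<sigma> ! j" by simp
qed

lemma H_zero_I:
  assumes "\<And>n e. 0 < e \<Longrightarrow> \<exists>c. A \<subseteq> (\<Union>i. cyl (c i)) \<and> (\<forall>i. n \<le> length (c i)) \<and>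
     (\<Sum>i. ennreal (2 powr (- s * real (length (c i))))) \<le> ennreal e"
  shows "hausdorff_measure s A = 0"
proof -
  have "(INF c \<in> {c :: nat \<Rightarrow> bool list. A \<subseteq> (\<Union>i. cyl (c i)) \<and> (\<forall>i. n \<le> length (c i))}.
        (\<Sum>i. ennreal (2 powr (- s * real (length (c i)))))) = 0" for n
  proof -
    have "(INF c \<in> {c :: nat \<Rightarrow> bool list. A \<subseteq> (\<Union>i. cyl (c i)) \<and> (\<forall>i. n \<le> length (c i))}.
        (\<Sum>i. ennreal (2 powr (- s * real (length (c i)))))) \<le> 0"
    proof (rule ennreal_le_epsilon)
      fix e :: real assume "0 < e"
      then obtain c where "A \<subseteq> (\<Union>i. cyl (c i)) \<and> (\<forall>i. n \<le> length (c i))"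
        "(\<Sum>i. ennreal (2 powr (- s * real (length (c i))))) \<le> ennreal e"
        using assms by blast
      then show "(INF c \<in> {c :: nat \<Rightarrow> bool list. A \<subseteq> (\<Union>i. cyl (c i)) \<and> (\<forall>i. n \<le> length (c i))}.
        (\<Sum>i. ennreal (2 powr (- s * real (length (c i)))))) \<le> 0 + ennreal e"
        by (intro INF_lower2[of c]) auto
    qed
    then show ?thesis by simp
  qed
  note eq = this
  show ?thesis by (simp only: hausdorff_measure_def eq) simp
qed

lemma H_zero_D:
  assumes "hausdorff_measure s A = 0" "0 < e"
  shows "\<exists>c. A \<subseteq> (\<Union>i. cyl (c i)) \<and> (\<forall>i. n \<le> length (c i)) \<and>
     (\<Sum>i. ennreal (2 powr (- s * real (length (c i))))) < ennreal e"
proof -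
  have "(INF c \<in> {c :: nat \<Rightarrow> bool list. A \<subseteq> (\<Union>i. cyl (c i)) \<and> (\<forall>i. n \<le> length (c i))}.
        (\<Sum>i. ennreal (2 powr (- s * real (length (c i)))))) \<le> hausdorff_measure s A"
    unfolding hausdorff_measure_def by (rule SUP_upper) simp
  then have "(INF c \<in> {c :: nat \<Rightarrow> bool list. A \<subseteq> (\<Union>i. cyl (c i)) \<and> (\<forall>i. n \<le> length (c i))}.
        (\<Sum>i. ennreal (2 powr (- s * real (length (c i)))))) < ennreal e"
    using assms by simp
  then show ?thesis unfolding INF_less_iff by blast
qed

lemma H_mono: "A \<subseteq> A' \<Longrightarrow> hausdorff_measure s A \<le> hausdorff_measure s A'"
  unfolding hausdorff_measure_def
  by (intro SUP_mono' INF_superset_mono) auto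


lemma transfer:
  assumes HB: "hausdorff_measure s B = 0" and s: "0 \<le> s" "s < t"
  shows "hausdorff_measure t {X. \<exists>Y. code X Y \<in> B} = 0"
proof (rule H_zero_I)
  fix n and e :: real assume e: "0 < e"
  have t: "0 < t" using s by linarith
  define d where "d = min ((t - s) / t) (1/2)"
  have d: "0 < d" using s t unfolding d_def by auto
  obtain N where N: "\<And>L. L \<ge> N \<Longrightarrow> real (cnt L) \<le> d * real L" using cnt_bound[OF d] by blast
  obtain c where c: "B \<subseteq> (\<Union>i. cyl (c i))" "\<And>i. max N (2*n) \<le> length (c i)"
    "(\<Sum>i. ennreal (2 powr (- s * real (length (c i))))) < ennreal e"
    using H_zero_D[OF HB e, of "max N (2*n)"] by blast
  show "\<exists>c. {X. \<exists>Y. code X Y \<in> B} \<subseteq> (\<Union>i. cyl (c i)) \<and> (\<forall>i. n \<le> length (c i)) \<and>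
     (\<Sum>i. ennreal (2 powr (- t * real (length (c i))))) \<le> ennreal e"
  proof (intro exI conjI allI)
    show "{X. \<exists>Y. code X Y \<in> B} \<subseteq> (\<Union>i. cyl (dl (c i)))"
      using c(1) cyl_dl by blast
    have main: "real (length (c i) - cnt (length (c i))) \<ge> real (length (c i)) / 2 \<and>
       - t * real (length (dl (c i))) \<le> - s * real (length (c i))" for i
    proof -
      define L where "L = length (c i)"
      have "real (cnt L) \<le> d * real L" using N c(2)[of i] unfolding L_def by simp
      moreover have "d \<le> 1/2" unfolding d_def by (rule min.cobounded2)
      then have "d * real L \<le> real L / 2" using mult_right_mono[of d "1/2" "real L"] by simp
      ultimately have cL: "real (cnt L) \<le> real L / 2" by linarith
      then have le: "cnt L \<le> L" by linarith
      have "t * d \<le> t - s" using t unfolding d_def by (auto simp: min_def field_simps)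
      then have "t * d * real L \<le> (t - s) * real L" by (simp add: mult_right_mono)
      moreover have "t * real (cnt L) \<le> t * (d * real L)"
        using \<open>real (cnt L) \<le> d * real L\<close> t by (simp add: mult_left_mono)
      ultimately have "t * real (cnt L) \<le> (t - s) * real L" by (simp add: mult.assoc)
      then have "- t * (real L - real (cnt L)) \<le> - s * real L" by (simp add: algebra_simps)
      then show ?thesis using cL le unfolding L_def len_dl by (simp add: of_nat_diff)
    qed
    fix i
    show "n \<le> length (dl (c i))"
    proof -
      have "real (length (c i)) \<ge> 2 * real n" using c(2)[of i] by simp
      then show ?thesis using main[of i] unfolding len_dl by linarith
    qed
  next
    have "(\<Sum>i. ennreal (2 powr (- t * real (length (dl (c i)))))) \<le>
          (\<Sum>i. ennreal (2 powr (- s * real (length (c i)))))"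
    proof (rule suminf_le[OF _ summableI summableI])
      fix i
      have "- t * real (length (dl (c i))) \<le> - s * real (length (c i))"
      proof -
        define L where "L = length (c i)"
        have "real (cnt L) \<le> d * real L" using N c(2)[of i] unfolding L_def by simp
        moreover have "d \<le> 1/2" unfolding d_def by (rule min.cobounded2)
      then have "d * real L \<le> real L / 2" using mult_right_mono[of d "1/2" "real L"] by simp
        ultimately have cL: "real (cnt L) \<le> real L / 2" by linarith
        then have le: "cnt L \<le> L" by linarith
        have "t * d \<le> t - s" using t unfolding d_def by (auto simp: min_def field_simps)
        then have "t * d * real L \<le> (t - s) * real L" by (simp add: mult_right_mono)
        moreover have "t * real (cnt L) \<le> t * (d * real L)"
          using \<open>real (cnt L) \<le> d * real L\<close> t by (simp add: mult_left_mono)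
        ultimately have "t * real (cnt L) \<le> (t - s) * real L" by (simp add: mult.assoc)
        then have "- t * (real L - real (cnt L)) \<le> - s * real L" by (simp add: algebra_simps)
        then show ?thesis using le unfolding L_def len_dl by (simp add: of_nat_diff)
      qed
      then show "ennreal (2 powr (- t * real (length (dl (c i))))) \<le> ennreal (2 powr (- s * real (length (c i))))"
        by (intro ennreal_leI powr_mono) auto
    qed
    then show "(\<Sum>i. ennreal (2 powr (- t * real (length (dl (c i)))))) \<le> ennreal e"
      using c(3) by simp
  qed
qed




fun bin :: "nat \<Rightarrow> nat \<Rightarrow> bool list" where
  "bin 0 i = []"
| "bin (Suc m) i = odd i # bin m (i div 2)"

fun num :: "bool list \<Rightarrow> nat" where
  "num [] = 0"
| "num (b # \<sigma>) = (if b then 1 else 0) + 2 * num \<sigma>"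

lemma len_bin: "length (bin m i) = m"
  by (induction m arbitrary: i) auto

lemma bin_num: "bin (length \<sigma>) (num \<sigma>) = \<sigma>"
  by (induction \<sigma>) auto

lemma num_less: "num \<sigma> < 2 ^ length \<sigma>"
  by (induction \<sigma>) auto

lemma pow_quarter: "(2::real) powr (- 2 * real k) = (1/4) ^ k"
proof -
  have "(2::real) powr (- 2 * real k) = inverse (2 powr real (2 * k))"
    by (simp add: powr_minus[symmetric])
  also have "\<dots> = inverse (2 ^ (2 * k))" by (simp only: powr_realpow)
  also have "\<dots> = (1/4) ^ k" by (simp add: power_mult power_one_over inverse_eq_divide)
  finally show ?thesis .
qed

lemma H2_univ: "hausdorff_measure 2 A = 0"
proof -
  have "hausdorff_measure 2 (UNIV :: nat set set) = 0"
  proof (rule H_zero_I)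
    fix n and e :: real assume e: "0 < e"
    obtain m0 where m0: "(1/2::real) ^ m0 < e / 3" using real_arch_pow_inv[of "e/3" "1/2"] e by auto
    define m where "m = max m0 n"
    have hm: "(1/2::real) ^ m \<le> (1/2) ^ m0" unfolding m_def by (rule power_decreasing) auto
    define c where "c = (\<lambda>i::nat. if i < 2^m then bin m i else replicate (m + i) True)"
    define g where "g = (\<lambda>i::nat. (if i < 2^m then (1/4::real)^m else 0) + (1/4)^m * (1/2)^i)"
    have s1: "summable (\<lambda>i::nat. if i < 2^m then (1/4::real)^m else 0)"
      by (rule summable_finite[of "{..<2^m}"]) auto
    have s2: "summable (\<lambda>i::nat. (1/4::real)^m * (1/2)^i)"
      by (rule summable_mult, rule summable_geometric) simp
    have sg: "summable g" unfolding g_def using summable_add[OF s1 s2] .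
    have "suminf g = (\<Sum>i. if i < 2^m then (1/4::real)^m else 0) + (\<Sum>i. (1/4::real)^m * (1/2)^i)"
      unfolding g_def using suminf_add[OF s1 s2] by simp
    also have "(\<Sum>i. if i < 2^m then (1/4::real)^m else 0) = (\<Sum>i\<in>{..<(2::nat)^m}. if i < 2^m then (1/4::real)^m else 0)"
      by (rule suminf_finite) auto
    also have "\<dots> = (\<Sum>i<(2::nat)^m. (1/4::real)^m)" by simp
    also have "(\<Sum>i. (1/4::real)^m * (1/2)^i) = (1/4)^m * 2"
      using suminf_mult[OF summable_geometric[of "1/2::real"]] suminf_geometric[of "1/2::real"] by simp
    finally have "suminf g = 2^m * (1/4::real)^m + (1/4)^m * 2" by simp
    also have "\<dots> = (1/2)^m + 2 * ((1/2)^m * (1/2)^m)"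
    proof -
      have f4: "(4::real)^m = 2^m * 2^m" using power_mult_distrib[of "2::real" 2 m] by simp
      show ?thesis by (simp add: power_divide f4)
    qed
    also have "\<dots> \<le> 3 * (1/2::real)^m"
    proof -
      have "(1/2::real)^m * (1/2)^m \<le> (1/2)^m * 1"
        by (rule mult_left_mono) (auto simp: power_le_one)
      then show ?thesis by simp
    qed
    finally have sumg: "suminf g \<le> e" using hm m0 by linarith
    show "\<exists>c. UNIV \<subseteq> (\<Union>i. cyl (c i)) \<and> (\<forall>i. n \<le> length (c i)) \<and>
       (\<Sum>i. ennreal (2 powr (- 2 * real (length (c i))))) \<le> ennreal e"
    proof (intro exI conjI allI)
      show "UNIV \<subseteq> (\<Union>i. cyl (c i))"
      proof
        fix X :: "nat set"
        define \<sigma> where "\<sigma> = map (\<lambda>k. k \<in> X) [0..<m]"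
        have "c (num \<sigma>) = \<sigma>" unfolding c_def using num_less[of \<sigma>] bin_num[of \<sigma>]
          unfolding \<sigma>_def by simp
        moreover have "X \<in> cyl \<sigma>" unfolding cyl_def \<sigma>_def by simp
        ultimately show "X \<in> (\<Union>i. cyl (c i))" by (metis UN_I UNIV_I)
      qed
      fix i show "n \<le> length (c i)" unfolding c_def m_def by (auto simp: len_bin)
    next
      have "(\<Sum>i. ennreal (2 powr (- 2 * real (length (c i))))) \<le> (\<Sum>i. ennreal (g i))"
      proof (rule suminf_le[OF _ summableI summableI])
        fix i
        show "ennreal (2 powr (- 2 * real (length (c i)))) \<le> ennreal (g i)"
        proof (cases "i < 2^m")
          case True
          then have l: "length (c i) = m" unfolding c_def by (simp add: len_bin)
          have "(1/4::real)^m \<le> g i" unfolding g_def using True by simp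
          then show ?thesis unfolding l pow_quarter by (rule ennreal_leI)
        next
          case False
          then have l: "length (c i) = m + i" unfolding c_def by simp
          have "(1/4::real)^(m+i) = (1/4)^m * ((1/2)^i * (1/2)^i)"
          proof -
            have f4: "(4::real)^i = 2^i * 2^i" using power_mult_distrib[of "2::real" 2 i] by simp
            show ?thesis by (simp add: power_add power_divide f4)
          qed
          also have "\<dots> \<le> (1/4)^m * (1/2)^i"
            by (intro mult_left_mono) (auto simp: power_le_one)
          also have "\<dots> \<le> g i" unfolding g_def using False by simp
          finally show ?thesis unfolding l pow_quarter by (rule ennreal_leI)
        qed
      qed
      also have "\<dots> = ennreal (suminf g)"
        by (rule suminf_ennreal2[OF _ sg]) (simp add: g_def)
      also have "\<dots> \<le> ennreal e" using sumg by (rule ennreal_leI)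
      finally show "(\<Sum>i. ennreal (2 powr (- 2 * real (length (c i))))) \<le> ennreal e" .
    qed
  qed
  then show ?thesis using H_mono[of A UNIV 2] by simp
qed

definition SH :: "nat set set \<Rightarrow> real set" where
  "SH A = {s. 0 \<le> s \<and> hausdorff_measure s A = 0}"

lemma dimH_SH: "dim_H A = Inf (SH A)" unfolding dim_H_def SH_def by simp
lemma SH_ne: "2 \<in> SH A" unfolding SH_def using H2_univ by simp
lemma SH_bdd: "bdd_below (SH A)" unfolding SH_def by (rule bdd_belowI[of _ 0]) auto

lemma dim_mono: assumes "A \<subseteq> A'" shows "dim_H A \<le> dim_H A'"
proof -
  have "SH A' \<subseteq> SH A"
  proof
    fix s assume "s \<in> SH A'"
    then have "0 \<le> s" "hausdorff_measure s A \<le> 0" using H_mono[OF assms, of s] unfolding SH_def by auto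
    then show "s \<in> SH A" unfolding SH_def by simp
  qed
  then show ?thesis unfolding dimH_SH using SH_ne SH_bdd by (intro cInf_superset_mono) auto
qed

lemma dim_transfer: "dim_H {X. \<exists>Y. code X Y \<in> B} \<le> dim_H B"
  unfolding dimH_SH
proof (rule cInf_greatest)
  show "SH B \<noteq> {}" using SH_ne by blast
  fix s assume s: "s \<in> SH B"
  show "Inf (SH {X. \<exists>Y. code X Y \<in> B}) \<le> s"
  proof (rule field_le_epsilon)
    fix e :: real assume "0 < e"
    then have "s + e \<in> SH {X. \<exists>Y. code X Y \<in> B}"
      using s transfer[of s B "s + e"] unfolding SH_def by auto
    then show "Inf (SH {X. \<exists>Y. code X Y \<in> B}) \<le> s + e" using SH_bdd by (rule cInf_lower)
  qed
qed


theorem mainTheorem12: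
  fixes B :: "nat set set" and r :: real
  assumes "dim_H Min_deg = r"
    and "maximal_antichain B"
  shows "dim_H B \<ge> r"
proof -
  have "dim_H Min_deg \<le> dim_H {X. \<exists>Y. code X Y \<in> B}"
    using Min_sub[OF assms(2)] by (rule dim_mono)
  also have "\<dots> \<le> dim_H B" by (rule dim_transfer)
  finally show ?thesis using assms(1) by simp
qed

end
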